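(* Let $m,n\in\mathbb{N}$, let $a_{\ell}>0$ and $z_{\ell}<1$ be real for $1\le\ell\le m$, and let $s_{j,\ell}\in\mathbb{C}$ with $\Re(s_{j,\ell})>0$ for $1\le j\le n$, $1\le\ell\le m$. Then the $n\times n$ matrix \[ \left(\prod_{\ell=1}^{m}\Gamma(s_{j,\ell}+\overline{s_{k,\ell}})\,\Phi(z_{\ell},\,s_{j,\ell}+\overline{s_{k,\ell}},\,a_{\ell})\right)_{j,k=1}^{n} \] is positive semidefinite.
   Context: $\Phi(z,s,a)$ is the Lerch transcendent, the analytic continuation of $\sum_{n=0}^{\infty}\frac{z^{n}}{(a+n)^{s}}$; for $a>0$, real $z<1$ and $\Re(s)>0$ it satisfies $\Gamma(s)\Phi(z,s,a)=\int_{0}^{\infty}\frac{x^{s-1}e^{-ax}}{1-ze^{-x}}dx$. $\Gamma$ is Euler's Gamma function. A complex matrix $A=(a_{j,k})$ is positive semidefinite if $\sum_{j,k}a_{j,k}w_j\overline{w_k}\ge0$ for all complex $w_j$. *)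

theory Defs
  imports "HOL-Analysis.Analysis"
begin

text \<open>Lerch transcendent on the region used in the statement (a > 0, real z < 1, Re s > 0),
  given by its integral representation
  Gamma(s) Phi(z,s,a) = integral over (0,inf) of x^(s-1) e^(-a x) / (1 - z e^(-x)) dx.\<close>
definition lerch_phi :: "real \<Rightarrow> complex \<Rightarrow> real \<Rightarrow> complex" where
  "lerch_phi z s a =
     integral {0<..} (\<lambda>x::real. (complex_of_real x powr (s - 1)) * complex_of_real (exp (- a * x))
        / complex_of_real (1 - z * exp (- x))) / Gamma s"

definition psd_matrix :: "nat \<Rightarrow> (nat \<Rightarrow> nat \<Rightarrow> complex) \<Rightarrow> bool" where
  "psd_matrix n A \<longleftrightarrow> (\<forall>w :: nat \<Rightarrow> complex.
      let q = (\<Sum>j=1..n. \<Sum>k=1..n. A j k * w j * cnj (w k)) in q \<in> \<real> \<and> 0 \<le> Re q)"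

end

theory Submission
  imports Defs
begin

lemma pw:
  fixes x :: real and s1 s2 :: complex
  assumes "x > 0"
  shows "complex_of_real x powr (s1 + cnj s2 - 1) =
         complex_of_real x powr (s1 - 1/2) * cnj (complex_of_real x powr (s2 - 1/2))"
proof -
  have L: "Ln (complex_of_real x) = of_real (ln x)" using assms by (simp add: Ln_of_real)
  show ?thesis using assms
    by (simp add: powr_def L exp_cnj exp_add[symmetric] algebra_simps)
qed

lemma denom_bound:
  fixes z x :: real assumes "z < 1" "x > 0"
  shows "min 1 (1 - z) \<le> 1 - z * exp (- x)"
proof (cases "z \<le> 0")
  case True
  then have "z * exp (-x) \<le> 0" by (simp add: mult_nonpos_nonneg)
  then show ?thesis by linarith
next
  case False
  have "exp (-x) \<le> 1" using assms by simp
  then have "z * exp (-x) \<le> z" using False by (simp add: mult_left_le)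
  then show ?thesis by linarith
qed

lemma integ:
  fixes s :: complex and a z :: real
  assumes "a > 0" "z < 1" "Re s > 0"
  shows "(\<lambda>x::real. (complex_of_real x powr (s - 1)) * complex_of_real (exp (- a * x))
        / complex_of_real (1 - z * exp (- x))) integrable_on {0<..}"
proof -
  define c where "c = min 1 (1 - z)"
  have c: "c > 0" using assms by (simp add: c_def)
  define F where "F = (\<lambda>t::real. complex_of_real t powr (s - 1) / of_real (exp (a * t)))"
  have F: "F absolutely_integrable_on {0<..}"
    unfolding F_def by (rule absolutely_integrable_Gamma_integral[OF assms(3,1)])
  hence Fn: "(\<lambda>x. norm (F x)) integrable_on {0<..}" by (simp add: absolutely_integrable_on_def)
  have "(\<lambda>x. (complex_of_real x powr (s - 1)) * complex_of_real (exp (- a * x))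
        / complex_of_real (1 - z * exp (- x))) absolutely_integrable_on {0<..}"
  proof (rule measurable_bounded_by_integrable_imp_absolutely_integrable)
    have pos: "\<And>x. x \<in> {0<..} \<Longrightarrow> 1 - z * exp (- x) > 0"
      using denom_bound[OF assms(2)] c c_def by fastforce
    show "(\<lambda>x. (complex_of_real x powr (s - 1)) * complex_of_real (exp (- a * x))
        / complex_of_real (1 - z * exp (- x))) \<in> borel_measurable (lebesgue_on {0<..})"
      apply (rule continuous_imp_measurable_on_sets_lebesgue)
       apply (intro continuous_intros)
      using pos by (auto simp flip: of_real_mult of_real_diff) (metis less_irrefl)
    show "{0::real<..} \<in> sets lebesgue" by (simp add: borel_open sets_completionI_sets)
    show "(\<lambda>x. norm (F x) * (1 / c)) integrable_on {0<..}"
      using integrable_on_cmult_right[OF Fn, of "1/c"] by simp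
    fix x :: real assume x: "x \<in> {0<..}"
    have d: "c \<le> 1 - z * exp (- x)" using denom_bound[OF assms(2)] x c_def by auto
    have "norm ((complex_of_real x powr (s - 1)) * complex_of_real (exp (- a * x))
        / complex_of_real (1 - z * exp (- x))) = norm (F x) / (1 - z * exp (- x))"
    proof -
      have d0: "1 - z * exp (- x) > 0" using c d by linarith
      have e: "exp (- (a * x)) = 1 / exp (a * x)" by (simp add: exp_minus field_simps)
      have n: "cmod (1 - complex_of_real z * complex_of_real (exp (- x))) = 1 - z * exp (- x)"
        using d0 by (metis abs_of_pos norm_of_real of_real_1 of_real_diff of_real_mult)
      show ?thesis using d0
        by (simp add: F_def norm_divide norm_mult e n)
    qed
    also have "\<dots> \<le> norm (F x) / c"
      using c d by (intro divide_left_mono) auto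
    finally show "norm ((complex_of_real x powr (s - 1)) * complex_of_real (exp (- a * x))
        / complex_of_real (1 - z * exp (- x))) \<le> norm (F x) * (1 / c)" by simp
  qed
  thus ?thesis using set_lebesgue_integral_eq_integral(1) by blast
qed

lemma schur:
  fixes A :: "nat \<Rightarrow> nat \<Rightarrow> complex" and g :: "nat \<Rightarrow> real \<Rightarrow> complex"
    and om :: "real \<Rightarrow> real" and S :: "real set"
  assumes psd: "psd_matrix n A"
   and int: "\<And>j k. j \<in> {1..n} \<Longrightarrow> k \<in> {1..n} \<Longrightarrow>
              (\<lambda>x. g j x * cnj (g k x) * of_real (om x)) integrable_on S"
   and om: "\<And>x. x \<in> S \<Longrightarrow> om x \<ge> 0"
  shows "psd_matrix n (\<lambda>j k. A j k * integral S (\<lambda>x. g j x * cnj (g k x) * of_real (om x)))"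
  unfolding psd_matrix_def Let_def
proof
  fix w :: "nat \<Rightarrow> complex"
  define h where "h j k x = A j k * w j * cnj (w k) * (g j x * cnj (g k x) * of_real (om x))" for j k x
  define Q where "Q x = (\<Sum>j=1..n. \<Sum>k=1..n. A j k * (w j * g j x) * cnj (w k * g k x))" for x
  have Qp: "Q x \<in> \<real> \<and> 0 \<le> Re (Q x)" for x
    using psd unfolding psd_matrix_def Let_def Q_def
    by (erule_tac x="\<lambda>j. w j * g j x" in allE) simp
  have hi: "h j k integrable_on S" if "j \<in> {1..n}" "k \<in> {1..n}" for j k
    unfolding h_def using int[OF that] by (rule integrable_on_mult_right)
  define G where "G x = (\<Sum>j=1..n. \<Sum>k=1..n. h j k x)" for x
  have Gi: "G integrable_on S" unfolding G_def
    by (intro integrable_sum hi) auto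
  have eq: "(\<Sum>j=1..n. \<Sum>k=1..n. A j k * integral S (\<lambda>x. g j x * cnj (g k x) * of_real (om x)) * w j * cnj (w k))
      = integral S G"
  proof -
    have "(\<Sum>j=1..n. \<Sum>k=1..n. A j k * integral S (\<lambda>x. g j x * cnj (g k x) * of_real (om x)) * w j * cnj (w k))
       = (\<Sum>j=1..n. \<Sum>k=1..n. integral S (h j k))"
      unfolding h_def by (simp add: Henstock_Kurzweil_Integration.integral_mult_right mult_ac)
    also have "\<dots> = (\<Sum>j=1..n. integral S (\<lambda>x. \<Sum>k=1..n. h j k x))"
      by (intro sum.cong refl integral_sum[symmetric] hi) auto
    also have "\<dots> = integral S G"
      unfolding G_def by (intro integral_sum[symmetric] integrable_sum hi) auto
    finally show ?thesis .
  qed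
  have GQ: "G x = Q x * of_real (om x)" for x
    unfolding G_def Q_def h_def by (simp add: sum_distrib_left mult_ac)
  have "Im (integral S G) = integral S (Im \<circ> G)"
    by (rule integral_linear[OF Gi bounded_linear_Im, symmetric])
  also have "\<dots> = integral S (\<lambda>x. 0)"
    by (rule integral_cong) (use Qp in \<open>auto simp: GQ complex_is_Real_iff\<close>)
  finally have im: "Im (integral S G) = 0" by simp
  have "Re (integral S G) = integral S (Re \<circ> G)"
    by (rule integral_linear[OF Gi bounded_linear_Re, symmetric])
  also have "\<dots> \<ge> 0"
    by (rule integral_nonneg[OF integrable_linear[OF Gi bounded_linear_Re]])
       (use Qp om in \<open>auto simp: GQ complex_is_Real_iff\<close>)
  finally have re: "Re (integral S G) \<ge> 0" .
  show "(\<Sum>j=1..n. \<Sum>k=1..n. A j k * integral S (\<lambda>x. g j x * cnj (g k x) * of_real (om x)) * w j * cnj (w k)) \<in> \<real> \<and>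
        0 \<le> Re (\<Sum>j=1..n. \<Sum>k=1..n. A j k * integral S (\<lambda>x. g j x * cnj (g k x) * of_real (om x)) * w j * cnj (w k))"
    unfolding eq using im re by (simp add: complex_is_Real_iff)
qed

lemma psd_one: "psd_matrix n (\<lambda>j k. 1)"
  unfolding psd_matrix_def Let_def
proof
  fix w :: "nat \<Rightarrow> complex"
  have "(\<Sum>j=1..n. \<Sum>k=1..n. 1 * w j * cnj (w k)) = (\<Sum>j=1..n. w j) * cnj (\<Sum>k=1..n. w k)"
    by (simp add: sum_product cnj_sum)
  also have "\<dots> = of_real ((cmod (\<Sum>j=1..n. w j))\<^sup>2)"
    by (rule complex_norm_square[symmetric])
  finally show "(\<Sum>j=1..n. \<Sum>k=1..n. 1 * w j * cnj (w k)) \<in> \<real> \<and> 0 \<le> Re (\<Sum>j=1..n. \<Sum>k=1..n. 1 * w j * cnj (w k))"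
    by simp
qed

lemma psd_cong:
  assumes "\<And>j k. j \<in> {1..n} \<Longrightarrow> k \<in> {1..n} \<Longrightarrow> A j k = B j k"
  shows "psd_matrix n A = psd_matrix n B"
proof -
  have "(\<Sum>j=1..n. \<Sum>k=1..n. A j k * w j * cnj (w k)) = (\<Sum>j=1..n. \<Sum>k=1..n. B j k * w j * cnj (w k))" for w
    using assms by (intro sum.cong refl) auto
  thus ?thesis unfolding psd_matrix_def by simp
qed

lemma kernel:
  fixes a z :: real and s1 s2 :: complex
  assumes "a > 0" "z < 1" "Re s1 > 0" "Re s2 > 0"
  shows "(\<lambda>x. complex_of_real x powr (s1 - 1/2) * cnj (complex_of_real x powr (s2 - 1/2)) *
            of_real (exp (- a * x) / (1 - z * exp (- x)))) integrable_on {0<..} \<and>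
         Gamma (s1 + cnj s2) * lerch_phi z (s1 + cnj s2) a =
         integral {0<..} (\<lambda>x. complex_of_real x powr (s1 - 1/2) * cnj (complex_of_real x powr (s2 - 1/2)) *
            of_real (exp (- a * x) / (1 - z * exp (- x))))"
proof -
  let ?s = "s1 + cnj s2"
  have rs: "Re ?s > 0" using assms by simp
  have eqp: "(complex_of_real x powr (?s - 1)) * complex_of_real (exp (- a * x))
        / complex_of_real (1 - z * exp (- x)) =
        complex_of_real x powr (s1 - 1/2) * cnj (complex_of_real x powr (s2 - 1/2)) *
            of_real (exp (- a * x) / (1 - z * exp (- x)))" if "x \<in> {0<..}" for x
    using that by (simp add: pw)
  have I: "(\<lambda>x::real. (complex_of_real x powr (?s - 1)) * complex_of_real (exp (- a * x))
        / complex_of_real (1 - z * exp (- x))) integrable_on {0<..}"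
    by (rule integ[OF assms(1,2) rs])
  have G: "Gamma ?s \<noteq> 0"
  proof
    assume "Gamma ?s = 0"
    then have "?s \<in> \<int>\<^sub>\<le>\<^sub>0" by (simp add: Gamma_eq_zero_iff)
    then obtain k :: int where k: "?s = of_int k" "k \<le> 0" by (auto elim!: nonpos_Ints_cases)
    then have "Re ?s = of_int k" by simp
    then show False using rs k(2) by simp
  qed
  have ie: "integral {0<..} (\<lambda>x::real. (complex_of_real x powr (?s - 1)) * complex_of_real (exp (- a * x))
        / complex_of_real (1 - z * exp (- x))) = integral {0<..} (\<lambda>x. complex_of_real x powr (s1 - 1/2) * cnj (complex_of_real x powr (s2 - 1/2)) *
            of_real (exp (- a * x) / (1 - z * exp (- x))))"
    by (rule integral_cong) (rule eqp)
  have "Gamma ?s * lerch_phi z ?s a = integral {0<..} (\<lambda>x::real. (complex_of_real x powr (?s - 1)) * complex_of_real (exp (- a * x))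
        / complex_of_real (1 - z * exp (- x)))"
    unfolding lerch_phi_def using G by simp
  with ie show ?thesis
    using integrable_eq[OF I eqp] by simp
qed

theorem mainTheorem14:
  fixes m n :: nat and a z :: "nat \<Rightarrow> real" and s :: "nat \<Rightarrow> nat \<Rightarrow> complex"
  assumes "\<And>l. 1 \<le> l \<Longrightarrow> l \<le> m \<Longrightarrow> a l > 0"
      and "\<And>l. 1 \<le> l \<Longrightarrow> l \<le> m \<Longrightarrow> z l < 1"
      and "\<And>j l. 1 \<le> j \<Longrightarrow> j \<le> n \<Longrightarrow> 1 \<le> l \<Longrightarrow> l \<le> m \<Longrightarrow> Re (s j l) > 0"
  shows "psd_matrix n (\<lambda>j k. \<Prod>l=1..m. Gamma (s j l + cnj (s k l)) *
                                   lerch_phi (z l) (s j l + cnj (s k l)) (a l))"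
proof -
  define T where "T l j k = Gamma (s j l + cnj (s k l)) * lerch_phi (z l) (s j l + cnj (s k l)) (a l)" for l j k
  have "psd_matrix n (\<lambda>j k. \<Prod>l=1..m'. T l j k)" if "m' \<le> m" for m'
    using that
  proof (induction m')
    case 0
    then show ?case using psd_one by simp
  next
    case (Suc m')
    let ?l = "Suc m'"
    define g where "g j x = complex_of_real x powr (s j ?l - 1/2)" for j x
    define om where "om x = exp (- a ?l * x) / (1 - z ?l * exp (- x))" for x
    have K: "(\<lambda>x. g j x * cnj (g k x) * of_real (om x)) integrable_on {0<..} \<and>
             T ?l j k = integral {0<..} (\<lambda>x. g j x * cnj (g k x) * of_real (om x))"
      if "j \<in> {1..n}" "k \<in> {1..n}" for j k
      unfolding g_def om_def T_def
      by (rule kernel) (use that Suc.prems assms in auto)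
    have omp: "om x \<ge> 0" if "x \<in> {0<..}" for x
    proof -
      have "z ?l < 1" using assms(2) Suc.prems by simp
      then have "min 1 (1 - z ?l) \<le> 1 - z ?l * exp (- x)" using denom_bound that by auto
      moreover have "min 1 (1 - z ?l) > 0" using \<open>z ?l < 1\<close> by simp
      ultimately show ?thesis unfolding om_def by simp
    qed
    have "psd_matrix n (\<lambda>j k. (\<Prod>l=1..m'. T l j k) * integral {0<..} (\<lambda>x. g j x * cnj (g k x) * of_real (om x)))"
      by (rule schur[OF Suc.IH]) (use Suc.prems K omp in auto)
    moreover have "(\<Prod>l=1..Suc m'. T l j k) = (\<Prod>l=1..m'. T l j k) * integral {0<..} (\<lambda>x. g j x * cnj (g k x) * of_real (om x))"
      if "j \<in> {1..n}" "k \<in> {1..n}" for j k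
      using K[OF that] by (simp add: prod.nat_ivl_Suc')
    ultimately show ?case by (subst psd_cong) auto
  qed
  from this[of m] show ?thesis unfolding T_def by simp
qed

end
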